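(* Let $\pi:H(\underline\kappa)\to\mathrm{End}_{\mathbb{C}}(V)$ be a representation and $\upsilon_0,\upsilon_n\in\mathbb{C}^*$. Define, in $\mathbb{C}(x)\otimes\mathrm{End}(V)$, $$K_0^V(x)=\frac{\pi(T_0^{-1})+(\upsilon_0^{-1}-\upsilon_0)x-x^2\pi(T_0)}{\kappa_0^{-1}(1-\kappa_0\upsilon_0x)(1+\kappa_0\upsilon_0^{-1}x)},\quad R_i^V(x)=\frac{\pi(T_i^{-1})-x\pi(T_i)}{\kappa^{-1}(1-\kappa^2x)}\ (1\le i<n),$$ $$K_n^V(x)=\frac{\pi(T_n^{-1})+(\upsilon_n^{-1}-\upsilon_n)x-x^2\pi(T_n)}{\kappa_n^{-1}(1-\kappa_n\upsilon_nx)(1+\kappa_n\upsilon_n^{-1}x)}.$$ Then, as rational functions of the spectral parameters: $K_0^V(x)R_1^V(xy)K_0^V(y)R_1^V(y/x)=R_1^V(y/x)K_0^V(y)R_1^V(xy)K_0^V(x)$; $R_i^V(x)R_{i+1}^V(xy)R_i^V(y)=R_{i+1}^V(y)R_i^V(xy)R_{i+1}^V(x)$ ($1\le i<n-1$); $K_n^V(y)R_{n-1}^V(xy)K_n^V(x)R_{n-1}^V(x/y)=R_{n-1}^V(x/y)K_n^V(x)R_{n-1}^V(xy)K_n^V(y)$; $K_0^V(x)K_0^V(x^{-1})=\mathrm{Id}_V=K_n^V(x)K_n^V(x^{-1})$, $R_i^V(x)R_i^V(x^{-1})=\mathrm{Id}_V$ ($1\le i<n$); $[K_0^V(x),R_i^V(y)]=0$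 ($2\le i<n$), $[K_n^V(x),R_i^V(y)]=0$ ($1\le i<n-1$), $[R_i^V(x),R_j^V(y)]=0$ ($|i-j|\ge2$), $[K_0^V(x),K_n^V(y)]=0$. Moreover $K_0^V(0)=\kappa_0\pi(T_0^{-1})$, $R_i^V(0)=\kappa\pi(T_i^{-1})$, $K_n^V(0)=\kappa_n\pi(T_n^{-1})$, and $K_0^V(1)=R_i^V(1)=K_n^V(1)=\mathrm{Id}_V$.
   Context: Fix $n\ge2$ and $\underline\kappa=(\kappa_0,\kappa_1,\ldots,\kappa_n)\in(\mathbb{C}^* )^{n+1}$ with $\kappa_1=\cdots=\kappa_{n-1}=:\kappa$. The affine Hecke algebra $H(\underline\kappa)$ of type $\widetilde C_n$ is the unital complex algebra with generators $T_0,\ldots,T_n$, subject to the braid relations $T_0T_1T_0T_1=T_1T_0T_1T_0$, $T_{n-1}T_nT_{n-1}T_n=T_nT_{n-1}T_nT_{n-1}$, $T_iT_{i+1}T_i=T_{i+1}T_iT_{i+1}$ ($1\le i<n-1$), $T_iT_j=T_jT_i$ ($0\le i,j\le n$, $|i-j|>1$), and the quadratic relations $(T_j-\kappa_j)(T_j+\kappa_j^{-1})=0$ ($0\le j\le n$). *)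

theory Defs
  imports Complex_Main
begin

text \<open>A complex vector space V is modelled by a type 'v with an addition (ab_group_add)
  and a scalar multiplication sc :: complex => 'v => 'v satisfying the vector space axioms.
  Endomorphisms are linear maps 'v => 'v, products are compositions.\<close>

definition hkap :: "nat \<Rightarrow> complex \<Rightarrow> complex \<Rightarrow> complex \<Rightarrow> nat \<Rightarrow> complex" where
  "hkap n k0 k kn j = (if j = 0 then k0 else if j = n then kn else k)"

text \<open>T :: nat => ('v => 'v), T j = pi(T_j) for 0 <= j <= n, defines a representation of
  the affine Hecke algebra H(kappa) of type C~_n on V iff the operators are linear and
  satisfy the defining relations.\<close>
definition is_affHeckeC_rep ::
  "(complex \<Rightarrow> 'v::ab_group_add \<Rightarrow> 'v) \<Rightarrow> nat \<Rightarrow> complex \<Rightarrow> complex \<Rightarrow> complex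
    \<Rightarrow> (nat \<Rightarrow> 'v \<Rightarrow> 'v) \<Rightarrow> bool" where
  "is_affHeckeC_rep sc n k0 k kn T \<longleftrightarrow>
     vector_space sc \<and>
     (\<forall>j\<le>n. Vector_Spaces.linear sc sc (T j)) \<and>
     T 0 \<circ> T 1 \<circ> T 0 \<circ> T 1 = T 1 \<circ> T 0 \<circ> T 1 \<circ> T 0 \<and>
     T (n-1) \<circ> T n \<circ> T (n-1) \<circ> T n = T n \<circ> T (n-1) \<circ> T n \<circ> T (n-1) \<and>
     (\<forall>i. 1 \<le> i \<and> i < n - 1 \<longrightarrow> T i \<circ> T (i+1) \<circ> T i = T (i+1) \<circ> T i \<circ> T (i+1)) \<and>
     (\<forall>i j. i \<le> n \<and> j \<le> n \<and> (i + 1 < j \<or> j + 1 < i) \<longrightarrow> T i \<circ> T j = T j \<circ> T i) \<and>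
     (\<forall>j\<le>n. (\<lambda>v. T j v - sc (hkap n k0 k kn j) v) \<circ> (\<lambda>v. T j v + sc (inverse (hkap n k0 k kn j)) v)
             = (\<lambda>v. 0))"

definition Kden :: "complex \<Rightarrow> complex \<Rightarrow> complex \<Rightarrow> complex" where
  "Kden kj u x = inverse kj * (1 - kj * u * x) * (1 + kj * inverse u * x)"

definition Rden :: "complex \<Rightarrow> complex \<Rightarrow> complex" where
  "Rden k x = inverse k * (1 - k\<^sup>2 * x)"

definition Kop :: "(complex \<Rightarrow> 'v::ab_group_add \<Rightarrow> 'v) \<Rightarrow> ('v \<Rightarrow> 'v) \<Rightarrow> complex \<Rightarrow> complex
    \<Rightarrow> complex \<Rightarrow> 'v \<Rightarrow> 'v" where
  "Kop sc Tj kj u x = (\<lambda>v. sc (inverse (Kden kj u x))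
      (inv Tj v + sc ((inverse u - u) * x) v - sc (x\<^sup>2) (Tj v)))"

definition Rop :: "(complex \<Rightarrow> 'v::ab_group_add \<Rightarrow> 'v) \<Rightarrow> ('v \<Rightarrow> 'v) \<Rightarrow> complex
    \<Rightarrow> complex \<Rightarrow> 'v \<Rightarrow> 'v" where
  "Rop sc Ti k x = (\<lambda>v. sc (inverse (Rden k x)) (inv Ti v - sc x (Ti v)))"

end

theory Submission
  imports Defs
begin

definition opK :: "('a::field \<Rightarrow> 'b::ab_group_add \<Rightarrow> 'b) \<Rightarrow> ('b\<Rightarrow>'b) \<Rightarrow> 'a \<Rightarrow> ('a\<Rightarrow>'a) \<Rightarrow> 'a \<Rightarrow> 'a \<Rightarrow> 'a \<Rightarrow> 'b \<Rightarrow> 'b" where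
  "opK sc a d iK u iu x w = sc (iK x * (1 - x^2)) (a w) + sc (iK x * ((iu - u)*x - d)) w"

definition opR :: "('a::field \<Rightarrow> 'b::ab_group_add \<Rightarrow> 'b) \<Rightarrow> ('b\<Rightarrow>'b) \<Rightarrow> 'a \<Rightarrow> ('a\<Rightarrow>'a) \<Rightarrow> 'a \<Rightarrow> 'b \<Rightarrow> 'b" where
  "opR sc b d iR x w = sc (iR x * (1 - x)) (b w) + sc (- (iR x * d)) w"

locale two = vector_space scale for scale :: "'a::field \<Rightarrow> 'b::ab_group_add \<Rightarrow> 'b" (infixr \<open>*s\<close> 75) +
  fixes a b :: "'b \<Rightarrow> 'b" and da db :: 'a
  assumes a_add: "a (x + y) = a x + a y" and a_sc: "a (c *s x) = c *s a x"
    and b_add: "b (x + y) = b x + b y" and b_sc: "b (c *s x) = c *s b x"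
    and qa: "a (a x) = da *s a x + x" and qb: "b (b x) = db *s b x + x"

locale B2 = two + assumes br4: "a (b (a (b x))) = b (a (b (a x)))"
begin

definition "E8 v c0 c1 c2 c3 c4 c5 c6 c7 = c0 *s v + c1 *s a v + c2 *s b v + c3 *s a (b v)
  + c4 *s b (a v) + c5 *s a (b (a v)) + c6 *s b (a (b v)) + c7 *s b (a (b (a v)))"

lemma opA_E8: "\<alpha> *s a (E8 v c0 c1 c2 c3 c4 c5 c6 c7) + \<beta> *s E8 v c0 c1 c2 c3 c4 c5 c6 c7 =
  E8 v (\<alpha>*c1 + \<beta>*c0) (\<alpha>*(c0 + da*c1) + \<beta>*c1) (\<alpha>*c3 + \<beta>*c2) (\<alpha>*(c2+da*c3) + \<beta>*c3)
    (\<alpha>*c5+\<beta>*c4) (\<alpha>*(c4+da*c5)+\<beta>*c5) (\<alpha>*c7+\<beta>*c6) (\<alpha>*(c6+da*c7)+\<beta>*c7)"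
  unfolding E8_def by (simp add: a_add a_sc b_add b_sc qa br4 scale_left_distrib scale_right_distrib) (simp add: algebra_simps)

lemma opB_E8: "\<alpha> *s b (E8 v c0 c1 c2 c3 c4 c5 c6 c7) + \<beta> *s E8 v c0 c1 c2 c3 c4 c5 c6 c7 =
  E8 v (\<alpha>*c2 + \<beta>*c0) (\<alpha>*c4 + \<beta>*c1) (\<alpha>*(c0 + db*c2) + \<beta>*c2) (\<alpha>*c6 + \<beta>*c3)
    (\<alpha>*(c1+db*c4)+\<beta>*c4) (\<alpha>*c7+\<beta>*c5) (\<alpha>*(c3+db*c6)+\<beta>*c6) (\<alpha>*(c5+db*c7)+\<beta>*c7)"
  unfolding E8_def by (simp add: a_add a_sc b_add b_sc qb br4 scale_left_distrib scale_right_distrib) (simp add: algebra_simps)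


lemma E8_cong: "c0=d0 \<Longrightarrow> c1=d1 \<Longrightarrow> c2=d2 \<Longrightarrow> c3=d3 \<Longrightarrow> c4=d4 \<Longrightarrow> c5=d5 \<Longrightarrow> c6=d6 \<Longrightarrow> c7=d7 \<Longrightarrow>
  E8 v c0 c1 c2 c3 c4 c5 c6 c7 = E8 v d0 d1 d2 d3 d4 d5 d6 d7" by simp

lemma E8_init: "E8 v 1 0 0 0 0 0 0 0 = v" by (simp add: E8_def)



lemma KA_E8: "opK scale a da iK u iu x (E8 v c0 c1 c2 c3 c4 c5 c6 c7) = E8 v
   ((iK x * (1 - x^2))*c1 + (iK x * ((iu - u)*x - da))*c0) ((iK x * (1 - x^2))*(c0 + da*c1) + (iK x * ((iu - u)*x - da))*c1) ((iK x * (1 - x^2))*c3 + (iK x * ((iu - u)*x - da))*c2) ((iK x * (1 - x^2))*(c2+da*c3) + (iK x * ((iu - u)*x - da))*c3)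
    ((iK x * (1 - x^2))*c5+(iK x * ((iu - u)*x - da))*c4) ((iK x * (1 - x^2))*(c4+da*c5)+(iK x * ((iu - u)*x - da))*c5) ((iK x * (1 - x^2))*c7+(iK x * ((iu - u)*x - da))*c6) ((iK x * (1 - x^2))*(c6+da*c7)+(iK x * ((iu - u)*x - da))*c7)"
  unfolding opK_def by (rule opA_E8)

lemma RB_E8: "opR scale b db iR x (E8 v c0 c1 c2 c3 c4 c5 c6 c7) = E8 v
  ((iR x * (1 - x))*c2 + (- (iR x * db))*c0) ((iR x * (1 - x))*c4 + (- (iR x * db))*c1) ((iR x * (1 - x))*(c0 + db*c2) + (- (iR x * db))*c2) ((iR x * (1 - x))*c6 + (- (iR x * db))*c3)
    ((iR x * (1 - x))*(c1+db*c4)+(- (iR x * db))*c4) ((iR x * (1 - x))*c7+(- (iR x * db))*c5) ((iR x * (1 - x))*(c3+db*c6)+(- (iR x * db))*c6) ((iR x * (1 - x))*(c5+db*c7)+(- (iR x * db))*c7)"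
  unfolding opR_def by (rule opB_E8)

lemma refl_eq:
  "opK scale a da iK u iu x (opR scale b db iR (x*x*z) (opK scale a da iK u iu (x*z) (opR scale b db iR z v))) =
   opR scale b db iR z (opK scale a da iK u iu (x*z) (opR scale b db iR (x*x*z) (opK scale a da iK u iu x v)))"
proof -
  have "opK scale a da iK u iu x (opR scale b db iR (x*x*z) (opK scale a da iK u iu (x*z) (opR scale b db iR z (E8 v 1 0 0 0 0 0 0 0)))) =
   opR scale b db iR z (opK scale a da iK u iu (x*z) (opR scale b db iR (x*x*z) (opK scale a da iK u iu x (E8 v 1 0 0 0 0 0 0 0))))"
    apply (simp only: KA_E8 RB_E8)
    apply (rule E8_cong)
    apply algebra+
    done
  thus ?thesis by (simp only: E8_init)
qed

lemma refl_eq2: assumes "y = x*z"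
  shows "opK scale a da iK u iu x (opR scale b db iR (x*y) (opK scale a da iK u iu y (opR scale b db iR z v))) =
   opR scale b db iR z (opK scale a da iK u iu y (opR scale b db iR (x*y) (opK scale a da iK u iu x v)))"
proof -
  show ?thesis using refl_eq[of iK u iu x iR z v] assms by (simp add: mult.assoc)
qed

end

locale A2 = two + assumes br3: "a (b (a x)) = b (a (b x))" and deq: "db = da"
begin

definition "E6 v c0 c1 c2 c3 c4 c5 = c0 *s v + c1 *s a v + c2 *s b v + c3 *s a (b v)
  + c4 *s b (a v) + c5 *s b (a (b v))"

lemma opA_E6: "\<alpha> *s a (E6 v c0 c1 c2 c3 c4 c5) + \<beta> *s E6 v c0 c1 c2 c3 c4 c5 =
  E6 v (\<alpha>*c1 + \<beta>*c0) (\<alpha>*(c0 + da*c1) + \<beta>*c1) (\<alpha>*c3 + \<beta>*c2) (\<alpha>*(c2+da*c3) + \<beta>*c3)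
    (\<alpha>*c5+\<beta>*c4) (\<alpha>*(c4+da*c5)+\<beta>*c5)"
  unfolding E6_def by (simp add: a_add a_sc b_add b_sc qa qb br3 deq scale_left_distrib scale_right_distrib) (simp add: algebra_simps)

lemma opB_E6: "\<alpha> *s b (E6 v c0 c1 c2 c3 c4 c5) + \<beta> *s E6 v c0 c1 c2 c3 c4 c5 =
  E6 v (\<alpha>*c2 + \<beta>*c0) (\<alpha>*c4 + \<beta>*c1) (\<alpha>*(c0 + da*c2) + \<beta>*c2) (\<alpha>*c5 + \<beta>*c3)
    (\<alpha>*(c1+da*c4)+\<beta>*c4) (\<alpha>*(c3+da*c5)+\<beta>*c5)"
  unfolding E6_def by (simp add: a_add a_sc b_add b_sc qa qb br3 deq scale_left_distrib scale_right_distrib) (simp add: algebra_simps)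

lemma E6_cong: "c0=d0 \<Longrightarrow> c1=d1 \<Longrightarrow> c2=d2 \<Longrightarrow> c3=d3 \<Longrightarrow> c4=d4 \<Longrightarrow> c5=d5 \<Longrightarrow>
  E6 v c0 c1 c2 c3 c4 c5 = E6 v d0 d1 d2 d3 d4 d5" by simp

lemma E6_init: "E6 v 1 0 0 0 0 0 = v" by (simp add: E6_def)

lemma RA_E6: "opR scale a da iR x (E6 v c0 c1 c2 c3 c4 c5) = E6 v
   ((iR x * (1 - x))*c1 + (- (iR x * da))*c0) ((iR x * (1 - x))*(c0 + da*c1) + (- (iR x * da))*c1) ((iR x * (1 - x))*c3 + (- (iR x * da))*c2) ((iR x * (1 - x))*(c2+da*c3) + (- (iR x * da))*c3)
    ((iR x * (1 - x))*c5+(- (iR x * da))*c4) ((iR x * (1 - x))*(c4+da*c5)+(- (iR x * da))*c5)"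
  unfolding opR_def by (rule opA_E6)

lemma RB_E6: "opR scale b da iR x (E6 v c0 c1 c2 c3 c4 c5) = E6 v
  ((iR x * (1 - x))*c2 + (- (iR x * da))*c0) ((iR x * (1 - x))*c4 + (- (iR x * da))*c1) ((iR x * (1 - x))*(c0 + da*c2) + (- (iR x * da))*c2) ((iR x * (1 - x))*c5 + (- (iR x * da))*c3)
    ((iR x * (1 - x))*(c1+da*c4)+(- (iR x * da))*c4) ((iR x * (1 - x))*(c3+da*c5)+(- (iR x * da))*c5)"
  unfolding opR_def by (rule opB_E6)

lemma ybe:
  "opR scale a da iR x (opR scale b da iR (x*y) (opR scale a da iR y v)) =
   opR scale b da iR y (opR scale a da iR (x*y) (opR scale b da iR x v))"
proof -
  have "opR scale a da iR x (opR scale b da iR (x*y) (opR scale a da iR y (E6 v 1 0 0 0 0 0))) =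
   opR scale b da iR y (opR scale a da iR (x*y) (opR scale b da iR x (E6 v 1 0 0 0 0 0)))"
    apply (simp only: RA_E6 RB_E6)
    apply (rule E6_cong)
    apply algebra+
    done
  thus ?thesis by (simp only: E6_init)
qed

end

locale C2 = two + assumes comm: "b (a x) = a (b x)"
begin

lemma comm_ops: "\<alpha> *s a (\<gamma> *s b v + \<delta> *s v) + \<beta> *s (\<gamma> *s b v + \<delta> *s v) =
   \<gamma> *s b (\<alpha> *s a v + \<beta> *s v) + \<delta> *s (\<alpha> *s a v + \<beta> *s v)"
  by (simp add: a_add a_sc b_add b_sc comm scale_right_distrib algebra_simps)

end

locale one = vector_space scale for scale :: "'a::field \<Rightarrow> 'b::ab_group_add \<Rightarrow> 'b" (infixr \<open>*s\<close> 75) +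
  fixes a :: "'b \<Rightarrow> 'b" and da :: 'a
  assumes a_add: "a (x + y) = a x + a y" and a_sc: "a (c *s x) = c *s a x"
    and qa: "a (a x) = da *s a x + x"
begin

lemma sq_ops: "\<alpha>1 *s a (\<alpha>2 *s a v + \<beta>2 *s v) + \<beta>1 *s (\<alpha>2 *s a v + \<beta>2 *s v) =
   (\<alpha>1*\<alpha>2 + \<beta>1*\<beta>2) *s v + (\<alpha>1*(\<beta>2 + da*\<alpha>2) + \<beta>1*\<alpha>2) *s a v"
  by (simp add: a_add a_sc qa scale_right_distrib scale_left_distrib algebra_simps)

end


lemma one_from_rep:
  assumes rep: "is_affHeckeC_rep sc n k0 k kn T" and j: "j \<le> n"
    and c: "c = hkap n k0 k kn j" and c0: "c \<noteq> 0"
  shows "one sc (T j) (c - inverse c)"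
proof -
  have vs: "vector_space sc" and lin: "Vector_Spaces.linear sc sc (T j)"
    using rep j unfolding is_affHeckeC_rep_def by auto
  interpret vector_space sc by (fact vs)
  have add: "\<And>x y. T j (x + y) = T j x + T j y" and scl: "\<And>c x. T j (sc c x) = sc c (T j x)"
    using lin unfolding Vector_Spaces.linear_iff by auto
  have q: "(\<lambda>v. T j v - sc c v) \<circ> (\<lambda>v. T j v + sc (inverse c) v) = (\<lambda>v. 0)"
    using rep j c unfolding is_affHeckeC_rep_def by auto
  have qa: "T j (T j x) = sc (c - inverse c) (T j x) + x" for x
  proof -
    have "T j (T j x + sc (inverse c) x) - sc c (T j x + sc (inverse c) x) = 0"
      using fun_cong[OF q, of x] by simp
    hence "T j (T j x) + sc (inverse c) (T j x) - (sc c (T j x) + sc (c * inverse c) x) = 0"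
      by (simp add: add scl scale_right_distrib)
    hence "T j (T j x) + sc (inverse c) (T j x) - (sc c (T j x) + x) = 0"
      using c0 by simp
    thus ?thesis by (simp add: scale_left_diff_distrib algebra_simps)
  qed
  show ?thesis by unfold_locales (auto simp: add scl qa)
qed

lemma (in one) inv_a: assumes "da = c - inverse c"
  shows "inv a = (\<lambda>w. a w - da *s w)"
proof (rule inv_unique_comp)
  have d: "a (x - y) = a x - a y" for x y
    using a_add[of "x - y" y] by (simp add: algebra_simps)
  show "a \<circ> (\<lambda>w. a w - da *s w) = id"
    by (rule ext) (simp add: d a_sc qa)
  show "(\<lambda>w. a w - da *s w) \<circ> a = id"
    by (rule ext) (simp add: qa)
qed

lemma Kop_eq: fixes sc :: "complex \<Rightarrow> 'v::ab_group_add \<Rightarrow> 'v"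
  assumes o: "one sc a da" and d: "da = c - inverse c"
  shows "Kop sc a c u x = opK sc a da (\<lambda>x. inverse (Kden c u x)) u (inverse u) x"
proof -
  interpret one sc a da by (fact o)
  show ?thesis
  unfolding Kop_def opK_def inv_a[OF d]
  by (rule ext) (simp add: scale_right_distrib scale_right_diff_distrib scale_left_diff_distrib algebra_simps)
qed

lemma Rop_eq: fixes sc :: "complex \<Rightarrow> 'v::ab_group_add \<Rightarrow> 'v"
  assumes o: "one sc a da" and d: "da = c - inverse c"
  shows "Rop sc a c x = opR sc a da (\<lambda>x. inverse (Rden c x)) x"
proof -
  interpret one sc a da by (fact o)
  show ?thesis
  unfolding Rop_def opR_def inv_a[OF d]
  by (rule ext) (simp add: scale_right_distrib scale_right_diff_distrib scale_left_diff_distrib algebra_simps)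
qed

lemma mkB2: "one sc a da \<Longrightarrow> one sc b db \<Longrightarrow> (\<And>x. a (b (a (b x))) = b (a (b (a x)))) \<Longrightarrow> B2 sc a b da db"
  unfolding B2_def B2_axioms_def two_def two_axioms_def one_def one_axioms_def by auto
lemma mkA2: "one sc a da \<Longrightarrow> one sc b da \<Longrightarrow> (\<And>x. a (b (a x)) = b (a (b x))) \<Longrightarrow> A2 sc a b da da"
  unfolding A2_def A2_axioms_def two_def two_axioms_def one_def one_axioms_def by auto
lemma mkC2: "one sc a da \<Longrightarrow> one sc b db \<Longrightarrow> (\<And>x. b (a x) = a (b x)) \<Longrightarrow> C2 sc a b da db"
  unfolding C2_def C2_axioms_def two_def two_axioms_def one_def one_axioms_def by auto

lemma C2_comm_fun: assumes "C2 sc a b da db"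
  shows "(\<lambda>w. sc \<alpha> (a w) + sc \<beta> w) \<circ> (\<lambda>w. sc \<gamma> (b w) + sc \<delta> w) = (\<lambda>w. sc \<gamma> (b w) + sc \<delta> w) \<circ> (\<lambda>w. sc \<alpha> (a w) + sc \<beta> w)"
  using C2.comm_ops[OF assms] by (auto simp: fun_eq_iff)

lemma opK_lam: "opK sc a d iK u iu x = (\<lambda>w. sc (iK x * (1 - x^2)) (a w) + sc (iK x * ((iu - u)*x - d)) w)"
  by (simp add: opK_def fun_eq_iff)
lemma opR_lam: "opR sc a d iR x = (\<lambda>w. sc (iR x * (1 - x)) (a w) + sc (- (iR x * d)) w)"
  by (simp add: opR_def fun_eq_iff)

lemma Kunit_scal:
  fixes k u x :: complex
  assumes "k \<noteq> 0" "u \<noteq> 0" "x \<noteq> 0" "Kden k u x \<noteq> 0" "Kden k u (inverse x) \<noteq> 0"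
  defines "a1 \<equiv> inverse (Kden k u x) * (1 - x^2)" and "b1 \<equiv> inverse (Kden k u x) * ((inverse u - u)*x - (k - inverse k))"
    and "a2 \<equiv> inverse (Kden k u (inverse x)) * (1 - (inverse x)^2)"
    and "b2 \<equiv> inverse (Kden k u (inverse x)) * ((inverse u - u)*(inverse x) - (k - inverse k))"
  shows "a1*a2 + b1*b2 = 1" "a1*(b2 + (k - inverse k)*a2) + b1*a2 = 0"
proof -
  have hk: "k * inverse k = 1" and hu: "u * inverse u = 1" and hx: "x * inverse x = 1"
    using assms by auto
  have N: "(1 - x^2)*(1 - (inverse x)^2) + ((inverse u - u)*x - (k - inverse k))*((inverse u - u)*(inverse x) - (k - inverse k))
     = Kden k u x * Kden k u (inverse x)"
    unfolding Kden_def using hk hu hx by algebra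
  have N2: "(1 - x^2)*((inverse u - u)*(inverse x) - (k - inverse k) + (k - inverse k)*(1 - (inverse x)^2))
     + ((inverse u - u)*x - (k - inverse k))*(1 - (inverse x)^2) = 0"
    using hk hu hx by algebra
  have "a1*a2 + b1*b2 = inverse (Kden k u x) * inverse (Kden k u (inverse x)) * ((1 - x^2)*(1 - (inverse x)^2) + ((inverse u - u)*x - (k - inverse k))*((inverse u - u)*(inverse x) - (k - inverse k)))"
    unfolding a1_def a2_def b1_def b2_def by algebra
  also have "\<dots> = 1" unfolding N using assms(4,5) by (simp add: field_simps)
  finally show "a1*a2 + b1*b2 = 1" .
  have "a1*(b2 + (k - inverse k)*a2) + b1*a2 = inverse (Kden k u x) * inverse (Kden k u (inverse x)) * ((1 - x^2)*((inverse u - u)*(inverse x) - (k - inverse k) + (k - inverse k)*(1 - (inverse x)^2))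
     + ((inverse u - u)*x - (k - inverse k))*(1 - (inverse x)^2))"
    unfolding a1_def a2_def b1_def b2_def by algebra
  also have "\<dots> = 0" using N2 by simp
  finally show "a1*(b2 + (k - inverse k)*a2) + b1*a2 = 0" .
qed

lemma Runit_scal:
  fixes k x :: complex
  assumes "k \<noteq> 0" "x \<noteq> 0" "Rden k x \<noteq> 0" "Rden k (inverse x) \<noteq> 0"
  defines "a1 \<equiv> inverse (Rden k x) * (1 - x)" and "b1 \<equiv> - (inverse (Rden k x) * (k - inverse k))"
    and "a2 \<equiv> inverse (Rden k (inverse x)) * (1 - inverse x)"
    and "b2 \<equiv> - (inverse (Rden k (inverse x)) * (k - inverse k))"
  shows "a1*a2 + b1*b2 = 1" "a1*(b2 + (k - inverse k)*a2) + b1*a2 = 0"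
proof -
  have hk: "k * inverse k = 1" and hx: "x * inverse x = 1"
    using assms by auto
  have N: "(1 - x)*(1 - inverse x) + (k - inverse k)*(k - inverse k) = Rden k x * Rden k (inverse x)"
    unfolding Rden_def using hk hx by algebra
  have N2: "(1 - x)*(- (k - inverse k) + (k - inverse k)*(1 - inverse x)) - (k - inverse k)*(1 - inverse x) = 0"
    using hk hx by algebra
  have "a1*a2 + b1*b2 = inverse (Rden k x) * inverse (Rden k (inverse x)) * ((1 - x)*(1 - inverse x) + (k - inverse k)*(k - inverse k))"
    unfolding a1_def a2_def b1_def b2_def by algebra
  also have "\<dots> = 1" unfolding N using assms(3,4) by (simp add: field_simps)
  finally show "a1*a2 + b1*b2 = 1" .
  have "a1*(b2 + (k - inverse k)*a2) + b1*a2 = inverse (Rden k x) * inverse (Rden k (inverse x)) * ((1 - x)*(- (k - inverse k) + (k - inverse k)*(1 - inverse x)) - (k - inverse k)*(1 - inverse x))"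
    unfolding a1_def a2_def b1_def b2_def by algebra
  also have "\<dots> = 0" using N2 by simp
  finally show "a1*(b2 + (k - inverse k)*a2) + b1*a2 = 0" .
qed


lemma K_unit: fixes sc :: "complex \<Rightarrow> 'v::ab_group_add \<Rightarrow> 'v"
  assumes o: "one sc a (c - inverse c)" and h: "c \<noteq> 0" "u \<noteq> 0" "x \<noteq> 0" "Kden c u x \<noteq> 0" "Kden c u (inverse x) \<noteq> 0"
  shows "Kop sc a c u x \<circ> Kop sc a c u (inverse x) = id"
proof (rule ext)
  fix v
  interpret one sc a "c - inverse c" by (fact o)
  have "(Kop sc a c u x \<circ> Kop sc a c u (inverse x)) v =
    sc (inverse (Kden c u x) * (1 - x^2)) (a (sc (inverse (Kden c u (inverse x)) * (1 - (inverse x)^2)) (a v) + sc (inverse (Kden c u (inverse x)) * ((inverse u - u)*(inverse x) - (c - inverse c))) v))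
    + sc (inverse (Kden c u x) * ((inverse u - u)*x - (c - inverse c))) (sc (inverse (Kden c u (inverse x)) * (1 - (inverse x)^2)) (a v) + sc (inverse (Kden c u (inverse x)) * ((inverse u - u)*(inverse x) - (c - inverse c))) v)"
    by (simp only: Kop_eq[OF o refl] opK_def o_def)
  also have "\<dots> = id v"
    by (simp only: sq_ops Kunit_scal[OF h]) simp
  finally show "(Kop sc a c u x \<circ> Kop sc a c u (inverse x)) v = id v" .
qed

lemma R_unit: fixes sc :: "complex \<Rightarrow> 'v::ab_group_add \<Rightarrow> 'v"
  assumes o: "one sc a (c - inverse c)" and h: "c \<noteq> 0" "x \<noteq> 0" "Rden c x \<noteq> 0" "Rden c (inverse x) \<noteq> 0"
  shows "Rop sc a c x \<circ> Rop sc a c (inverse x) = id"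
proof (rule ext)
  fix v
  interpret one sc a "c - inverse c" by (fact o)
  have "(Rop sc a c x \<circ> Rop sc a c (inverse x)) v =
    sc (inverse (Rden c x) * (1 - x)) (a (sc (inverse (Rden c (inverse x)) * (1 - inverse x)) (a v) + sc (- (inverse (Rden c (inverse x)) * (c - inverse c))) v))
    + sc (- (inverse (Rden c x) * (c - inverse c))) (sc (inverse (Rden c (inverse x)) * (1 - inverse x)) (a v) + sc (- (inverse (Rden c (inverse x)) * (c - inverse c))) v)"
    by (simp only: Rop_eq[OF o refl] opR_def o_def)
  also have "\<dots> = id v"
    by (simp only: sq_ops Runit_scal[OF h]) simp
  finally show "(Rop sc a c x \<circ> Rop sc a c (inverse x)) v = id v" .
qed

lemma K_at1: fixes sc :: "complex \<Rightarrow> 'v::ab_group_add \<Rightarrow> 'v"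
  assumes o: "one sc a (c - inverse c)" and h: "c \<noteq> 0" "u \<noteq> 0" "Kden c u 1 \<noteq> 0"
  shows "Kop sc a c u 1 = id"
proof -
  interpret one sc a "c - inverse c" by (fact o)
  have "(inverse u - u) - (c - inverse c) = Kden c u 1"
    unfolding Kden_def using h by (simp add: field_simps)
  hence "inverse (Kden c u 1) * ((inverse u - u) * 1 - (c - inverse c)) = 1" using h by simp
  thus ?thesis by (simp add: Kop_eq[OF o refl] opK_def fun_eq_iff)
qed

lemma R_at1: fixes sc :: "complex \<Rightarrow> 'v::ab_group_add \<Rightarrow> 'v"
  assumes o: "one sc a (c - inverse c)" and h: "c \<noteq> 0" "Rden c 1 \<noteq> 0"
  shows "Rop sc a c 1 = id"
proof -
  interpret one sc a "c - inverse c" by (fact o)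
  have "- (c - inverse c) = Rden c 1"
    unfolding Rden_def using h by (simp add: field_simps power2_eq_square)
  hence "- (inverse (Rden c 1) * (c - inverse c)) = 1" using h by (simp add: field_simps)
  thus ?thesis by (simp add: Rop_eq[OF o refl] opR_def fun_eq_iff)
qed

lemma K_at0: fixes sc :: "complex \<Rightarrow> 'v::ab_group_add \<Rightarrow> 'v"
  assumes "vector_space sc" "c \<noteq> 0"
  shows "Kop sc a c u 0 = (\<lambda>v. sc c (inv a v))"
proof -
  interpret vector_space sc by fact
  show ?thesis using assms(2) by (simp add: Kop_def Kden_def fun_eq_iff)
qed

lemma R_at0: fixes sc :: "complex \<Rightarrow> 'v::ab_group_add \<Rightarrow> 'v"
  assumes "vector_space sc" "c \<noteq> 0"
  shows "Rop sc a c 0 = (\<lambda>v. sc c (inv a v))"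
proof -
  interpret vector_space sc by fact
  show ?thesis using assms(2) by (simp add: Rop_def Rden_def fun_eq_iff)
qed

theorem mainTheorem6:
  fixes sc :: "complex \<Rightarrow> 'v::ab_group_add \<Rightarrow> 'v"
    and T :: "nat \<Rightarrow> 'v \<Rightarrow> 'v"
    and n :: nat and k0 k kn u0 un :: complex
  defines "K0 \<equiv> Kop sc (T 0) k0 u0"
    and "Kn \<equiv> Kop sc (T n) kn un"
    and "R \<equiv> (\<lambda>i. Rop sc (T i) k)"
  assumes "n \<ge> 2"
    and "k0 \<noteq> 0" and "k \<noteq> 0" and "kn \<noteq> 0" and "u0 \<noteq> 0" and "un \<noteq> 0"
    and "is_affHeckeC_rep sc n k0 k kn T"
  shows
    "(\<forall>x y. x \<noteq> 0 \<and> y \<noteq> 0 \<and> Kden k0 u0 x \<noteq> 0 \<and> Kden k0 u0 y \<noteq> 0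
        \<and> Rden k (x*y) \<noteq> 0 \<and> Rden k (y/x) \<noteq> 0 \<longrightarrow>
        K0 x \<circ> R 1 (x*y) \<circ> K0 y \<circ> R 1 (y/x) = R 1 (y/x) \<circ> K0 y \<circ> R 1 (x*y) \<circ> K0 x)
   \<and> (\<forall>i x y. 1 \<le> i \<and> i < n - 1 \<and> Rden k x \<noteq> 0 \<and> Rden k y \<noteq> 0 \<and> Rden k (x*y) \<noteq> 0 \<longrightarrow>
        R i x \<circ> R (i+1) (x*y) \<circ> R i y = R (i+1) y \<circ> R i (x*y) \<circ> R (i+1) x)
   \<and> (\<forall>x y. x \<noteq> 0 \<and> y \<noteq> 0 \<and> Kden kn un x \<noteq> 0 \<and> Kden kn un y \<noteq> 0
        \<and> Rden k (x*y) \<noteq> 0 \<and> Rden k (x/y) \<noteq> 0 \<longrightarrow>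
        Kn y \<circ> R (n-1) (x*y) \<circ> Kn x \<circ> R (n-1) (x/y) = R (n-1) (x/y) \<circ> Kn x \<circ> R (n-1) (x*y) \<circ> Kn y)
   \<and> (\<forall>x. x \<noteq> 0 \<and> Kden k0 u0 x \<noteq> 0 \<and> Kden k0 u0 (inverse x) \<noteq> 0 \<longrightarrow> K0 x \<circ> K0 (inverse x) = id)
   \<and> (\<forall>x. x \<noteq> 0 \<and> Kden kn un x \<noteq> 0 \<and> Kden kn un (inverse x) \<noteq> 0 \<longrightarrow> Kn x \<circ> Kn (inverse x) = id)
   \<and> (\<forall>i x. 1 \<le> i \<and> i < n \<and> x \<noteq> 0 \<and> Rden k x \<noteq> 0 \<and> Rden k (inverse x) \<noteq> 0 \<longrightarrow>
        R i x \<circ> R i (inverse x) = id)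
   \<and> (\<forall>i x y. 2 \<le> i \<and> i < n \<and> Kden k0 u0 x \<noteq> 0 \<and> Rden k y \<noteq> 0 \<longrightarrow> K0 x \<circ> R i y = R i y \<circ> K0 x)
   \<and> (\<forall>i x y. 1 \<le> i \<and> i < n - 1 \<and> Kden kn un x \<noteq> 0 \<and> Rden k y \<noteq> 0 \<longrightarrow> Kn x \<circ> R i y = R i y \<circ> Kn x)
   \<and> (\<forall>i j x y. 1 \<le> i \<and> i < n \<and> 1 \<le> j \<and> j < n \<and> (i + 2 \<le> j \<or> j + 2 \<le> i)
        \<and> Rden k x \<noteq> 0 \<and> Rden k y \<noteq> 0 \<longrightarrow> R i x \<circ> R j y = R j y \<circ> R i x)
   \<and> (\<forall>x y. Kden k0 u0 x \<noteq> 0 \<and> Kden kn un y \<noteq> 0 \<longrightarrow> K0 x \<circ> Kn y = Kn y \<circ> K0 x)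
   \<and> K0 0 = (\<lambda>v. sc k0 (inv (T 0) v))
   \<and> (\<forall>i. 1 \<le> i \<and> i < n \<longrightarrow> R i 0 = (\<lambda>v. sc k (inv (T i) v)))
   \<and> Kn 0 = (\<lambda>v. sc kn (inv (T n) v))
   \<and> (Kden k0 u0 1 \<noteq> 0 \<longrightarrow> K0 1 = id)
   \<and> (\<forall>i. 1 \<le> i \<and> i < n \<and> Rden k 1 \<noteq> 0 \<longrightarrow> R i 1 = id)
   \<and> (Kden kn un 1 \<noteq> 0 \<longrightarrow> Kn 1 = id)"
proof -
  note rep = assms(10)
  have n0: "n \<noteq> 0" and n1: "1 < n" using assms(4) by auto
  have vs: "vector_space sc" using rep unfolding is_affHeckeC_rep_def by auto
  have hk0: "hkap n k0 k kn 0 = k0" by (simp add: hkap_def)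
  have hkn: "hkap n k0 k kn n = kn" using n0 by (simp add: hkap_def)
  have hki: "\<And>i. 1 \<le> i \<Longrightarrow> i < n \<Longrightarrow> hkap n k0 k kn i = k" by (simp add: hkap_def)
  have O0: "one sc (T 0) (k0 - inverse k0)"
    by (rule one_from_rep[OF rep _ hk0[symmetric]]) (use assms(5) in auto)
  have On: "one sc (T n) (kn - inverse kn)"
    by (rule one_from_rep[OF rep _ hkn[symmetric]]) (use assms(7) in auto)
  have Oi: "one sc (T i) (k - inverse k)" if "1 \<le> i" "i < n" for i
    by (rule one_from_rep[OF rep _ hki[OF that, symmetric]]) (use assms(6) that in auto)
  have K0e: "\<And>x. K0 x = opK sc (T 0) (k0 - inverse k0) (\<lambda>x. inverse (Kden k0 u0 x)) u0 (inverse u0) x"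
    unfolding K0_def by (rule Kop_eq[OF O0 refl])
  have Kne: "\<And>x. Kn x = opK sc (T n) (kn - inverse kn) (\<lambda>x. inverse (Kden kn un x)) un (inverse un) x"
    unfolding Kn_def by (rule Kop_eq[OF On refl])
  have Re: "\<And>x. R i x = opR sc (T i) (k - inverse k) (\<lambda>x. inverse (Rden k x)) x" if "1 \<le> i" "i < n" for i
    unfolding R_def by (rule Rop_eq[OF Oi[OF that] refl])
  have br01: "\<And>x. T 0 (T 1 (T 0 (T 1 x))) = T 1 (T 0 (T 1 (T 0 x)))"
    using rep unfolding is_affHeckeC_rep_def by (auto simp: fun_eq_iff)
  have brn: "\<And>x. T n (T (n-1) (T n (T (n-1) x))) = T (n-1) (T n (T (n-1) (T n x)))"
    using rep unfolding is_affHeckeC_rep_def by (auto simp: fun_eq_iff)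
  have br3: "\<And>x. T i (T (i+1) (T i x)) = T (i+1) (T i (T (i+1) x))" if "1 \<le> i" "i < n - 1" for i
    using rep that unfolding is_affHeckeC_rep_def by (auto simp: fun_eq_iff)
  have cm: "\<And>x. T j (T i x) = T i (T j x)" if "i \<le> n" "j \<le> n" "i + 1 < j \<or> j + 1 < i" for i j
  proof -
    have "T i \<circ> T j = T j \<circ> T i" using rep that unfolding is_affHeckeC_rep_def by blast
    thus "\<And>x. T j (T i x) = T i (T j x)" by (auto simp: fun_eq_iff)
  qed
  have P1: "\<forall>x y. x \<noteq> 0 \<and> y \<noteq> 0 \<and> Kden k0 u0 x \<noteq> 0 \<and> Kden k0 u0 y \<noteq> 0
        \<and> Rden k (x*y) \<noteq> 0 \<and> Rden k (y/x) \<noteq> 0 \<longrightarrow>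
        K0 x \<circ> R 1 (x*y) \<circ> K0 y \<circ> R 1 (y/x) = R 1 (y/x) \<circ> K0 y \<circ> R 1 (x*y) \<circ> K0 x"
  proof (intro allI impI)
    fix x y :: complex assume h: "x \<noteq> 0 \<and> y \<noteq> 0 \<and> Kden k0 u0 x \<noteq> 0 \<and> Kden k0 u0 y \<noteq> 0
        \<and> Rden k (x*y) \<noteq> 0 \<and> Rden k (y/x) \<noteq> 0"
    have B: "B2 sc (T 0) (T 1) (k0 - inverse k0) (k - inverse k)"
      by (rule mkB2[OF O0 Oi[of 1] br01]) (use n1 in auto)
    have yx: "y = x * (y/x)" using h by simp
    show "K0 x \<circ> R 1 (x*y) \<circ> K0 y \<circ> R 1 (y/x) = R 1 (y/x) \<circ> K0 y \<circ> R 1 (x*y) \<circ> K0 x"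
      using B2.refl_eq2[OF B yx] n1 by (simp add: fun_eq_iff K0e Re)
  qed
  have P2: "\<forall>i x y. 1 \<le> i \<and> i < n - 1 \<and> Rden k x \<noteq> 0 \<and> Rden k y \<noteq> 0 \<and> Rden k (x*y) \<noteq> 0 \<longrightarrow>
        R i x \<circ> R (i+1) (x*y) \<circ> R i y = R (i+1) y \<circ> R i (x*y) \<circ> R (i+1) x"
  proof (intro allI impI)
    fix i x y assume h: "1 \<le> i \<and> i < n - 1 \<and> Rden k x \<noteq> 0 \<and> Rden k y \<noteq> 0 \<and> Rden k (x*y) \<noteq> 0"
    have A: "A2 sc (T i) (T (i+1)) (k - inverse k) (k - inverse k)"
      by (rule mkA2[OF Oi[of i] Oi[of "i+1"] br3]) (use h in auto)
    have i1: "1 \<le> i" "i < n" and i2: "1 \<le> Suc i" "Suc i < n" using h by auto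
    show "R i x \<circ> R (i+1) (x*y) \<circ> R i y = R (i+1) y \<circ> R i (x*y) \<circ> R (i+1) x"
      using A2.ybe[OF A] by (simp add: fun_eq_iff Re[OF i1] Re[OF i2])
  qed
  have P3: "\<forall>x y. x \<noteq> 0 \<and> y \<noteq> 0 \<and> Kden kn un x \<noteq> 0 \<and> Kden kn un y \<noteq> 0
        \<and> Rden k (x*y) \<noteq> 0 \<and> Rden k (x/y) \<noteq> 0 \<longrightarrow>
        Kn y \<circ> R (n-1) (x*y) \<circ> Kn x \<circ> R (n-1) (x/y) = R (n-1) (x/y) \<circ> Kn x \<circ> R (n-1) (x*y) \<circ> Kn y"
  proof (intro allI impI)
    fix x y :: complex assume h: "x \<noteq> 0 \<and> y \<noteq> 0 \<and> Kden kn un x \<noteq> 0 \<and> Kden kn un y \<noteq> 0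
        \<and> Rden k (x*y) \<noteq> 0 \<and> Rden k (x/y) \<noteq> 0"
    have B: "B2 sc (T n) (T (n-1)) (kn - inverse kn) (k - inverse k)"
      by (rule mkB2[OF On Oi[of "n-1"] brn]) (use n1 in auto)
    have xy: "x = y * (x/y)" using h by simp
    have ni: "1 \<le> n - Suc 0" "n - Suc 0 < n" using n1 by auto
    show "Kn y \<circ> R (n-1) (x*y) \<circ> Kn x \<circ> R (n-1) (x/y) = R (n-1) (x/y) \<circ> Kn x \<circ> R (n-1) (x*y) \<circ> Kn y"
      using B2.refl_eq2[OF B xy, unfolded mult.commute[of y x]]
      by (simp add: fun_eq_iff Kne Re[OF ni])
  qed
  have P4: "\<forall>x. x \<noteq> 0 \<and> Kden k0 u0 x \<noteq> 0 \<and> Kden k0 u0 (inverse x) \<noteq> 0 \<longrightarrow> K0 x \<circ> K0 (inverse x) = id"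
    unfolding K0_def using K_unit[OF O0] assms(5,8) by blast
  have P5: "\<forall>x. x \<noteq> 0 \<and> Kden kn un x \<noteq> 0 \<and> Kden kn un (inverse x) \<noteq> 0 \<longrightarrow> Kn x \<circ> Kn (inverse x) = id"
    unfolding Kn_def using K_unit[OF On] assms(7,9) by blast
  have P6: "\<forall>i x. 1 \<le> i \<and> i < n \<and> x \<noteq> 0 \<and> Rden k x \<noteq> 0 \<and> Rden k (inverse x) \<noteq> 0 \<longrightarrow>
        R i x \<circ> R i (inverse x) = id"
    unfolding R_def using R_unit[OF Oi] assms(6) by blast
  have P7: "\<forall>i x y. 2 \<le> i \<and> i < n \<and> Kden k0 u0 x \<noteq> 0 \<and> Rden k y \<noteq> 0 \<longrightarrow> K0 x \<circ> R i y = R i y \<circ> K0 x"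
  proof (intro allI impI)
    fix i x y assume h: "2 \<le> i \<and> i < n \<and> Kden k0 u0 x \<noteq> 0 \<and> Rden k y \<noteq> 0"
    hence i: "1 \<le> i" "i < n" by auto
    have C: "C2 sc (T 0) (T i) (k0 - inverse k0) (k - inverse k)"
    proof (rule mkC2[OF O0 Oi[OF i]])
      show "\<And>x. T i (T 0 x) = T 0 (T i x)" by (rule cm) (use h in auto)
    qed
    show "K0 x \<circ> R i y = R i y \<circ> K0 x"
      by (simp only: K0e Re[OF i] opK_lam opR_lam) (rule C2_comm_fun[OF C])
  qed
  have P8: "\<forall>i x y. 1 \<le> i \<and> i < n - 1 \<and> Kden kn un x \<noteq> 0 \<and> Rden k y \<noteq> 0 \<longrightarrow> Kn x \<circ> R i y = R i y \<circ> Kn x"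
  proof (intro allI impI)
    fix i x y assume h: "1 \<le> i \<and> i < n - 1 \<and> Kden kn un x \<noteq> 0 \<and> Rden k y \<noteq> 0"
    hence i: "1 \<le> i" "i < n" by auto
    have C: "C2 sc (T n) (T i) (kn - inverse kn) (k - inverse k)"
    proof (rule mkC2[OF On Oi[OF i]])
      show "\<And>x. T i (T n x) = T n (T i x)" by (rule cm) (use h in auto)
    qed
    show "Kn x \<circ> R i y = R i y \<circ> Kn x"
      by (simp only: Kne Re[OF i] opK_lam opR_lam) (rule C2_comm_fun[OF C])
  qed
  have P9: "\<forall>i j x y. 1 \<le> i \<and> i < n \<and> 1 \<le> j \<and> j < n \<and> (i + 2 \<le> j \<or> j + 2 \<le> i)
        \<and> Rden k x \<noteq> 0 \<and> Rden k y \<noteq> 0 \<longrightarrow> R i x \<circ> R j y = R j y \<circ> R i x"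
  proof (intro allI impI)
    fix i j x y assume h: "1 \<le> i \<and> i < n \<and> 1 \<le> j \<and> j < n \<and> (i + 2 \<le> j \<or> j + 2 \<le> i)
        \<and> Rden k x \<noteq> 0 \<and> Rden k y \<noteq> 0"
    hence i: "1 \<le> i" "i < n" and j: "1 \<le> j" "j < n" by auto
    have C: "C2 sc (T i) (T j) (k - inverse k) (k - inverse k)"
    proof (rule mkC2[OF Oi[OF i] Oi[OF j]])
      show "\<And>x. T j (T i x) = T i (T j x)" by (rule cm) (use h in auto)
    qed
    have "R i x \<circ> R j y = R j y \<circ> R i x"
      apply (simp only: Re[OF i] Re[OF j])
      apply (simp only: opR_lam)
      apply (rule C2_comm_fun[OF C])
      done
    thus "R i x \<circ> R j y = R j y \<circ> R i x" .
  qed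
  have P10: "\<forall>x y. Kden k0 u0 x \<noteq> 0 \<and> Kden kn un y \<noteq> 0 \<longrightarrow> K0 x \<circ> Kn y = Kn y \<circ> K0 x"
  proof (intro allI impI)
    fix x y
    have C: "C2 sc (T 0) (T n) (k0 - inverse k0) (kn - inverse kn)"
    proof (rule mkC2[OF O0 On])
      show "\<And>x. T n (T 0 x) = T 0 (T n x)" by (rule cm) (use n1 in auto)
    qed
    show "K0 x \<circ> Kn y = Kn y \<circ> K0 x"
      by (simp only: K0e Kne opK_lam) (rule C2_comm_fun[OF C])
  qed
  have P11: "K0 0 = (\<lambda>v. sc k0 (inv (T 0) v))"
    unfolding K0_def by (rule K_at0[OF vs assms(5)])
  have P12: "\<forall>i. 1 \<le> i \<and> i < n \<longrightarrow> R i 0 = (\<lambda>v. sc k (inv (T i) v))"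
    unfolding R_def using R_at0[OF vs assms(6)] by blast
  have P13: "Kn 0 = (\<lambda>v. sc kn (inv (T n) v))"
    unfolding Kn_def by (rule K_at0[OF vs assms(7)])
  have P14: "Kden k0 u0 1 \<noteq> 0 \<longrightarrow> K0 1 = id"
    unfolding K0_def using K_at1[OF O0 assms(5,8)] by blast
  have P15: "\<forall>i. 1 \<le> i \<and> i < n \<and> Rden k 1 \<noteq> 0 \<longrightarrow> R i 1 = id"
    unfolding R_def using R_at1[OF Oi assms(6)] by blast
  have P16: "Kden kn un 1 \<noteq> 0 \<longrightarrow> Kn 1 = id"
    unfolding Kn_def using K_at1[OF On assms(7,9)] by blast
  show ?thesis
    using P1 P2 P3 P4 P5 P6 P7 P8 P9 P10 P11 P12 P13 P14 P15 P16 by blast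
qed

end
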